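(* Let $X$ be a Tychonoff space and $x \in X$. If player II has a winning strategy in the game $\mathsf{G}_1(\Omega_x, \Omega_x)$, then $X$ is productively countably tight at $x$.
   Context: For a point $x$ of a space $X$, $\Omega_x$ denotes the collection of all sets $A \subset X$ such that $x \notin A$ and $x \in \overline{A}$. The game $\mathsf{G}_1(\Omega_x,\Omega_x)$ is played in innings $n \in \omega$: in inning $n$ player I chooses $A_n \in \Omega_x$ and then player II chooses $a_n \in A_n$; player II wins if $\{a_n : n \in \omega\} \in \Omega_x$. A space $Y$ has countable tightness at $y \in Y$ if whenever $y \in \overline{A}$ there is a countable $B \subset A$ with $y \in \overline{B}$. $X$ is productively countably tight at $x$ if for every space $Y$ and every $y \in Y$ such that $Y$ has countable tightness at $y$, the product $X \times Y$ has countable tightness at $\langle x, y\rangle$. *)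

theory Defs
  imports "HOL-Analysis.Analysis"
begin

definition tychonoff_space :: "'a topology \<Rightarrow> bool" where
  "tychonoff_space X \<longleftrightarrow> completely_regular_space X \<and> Hausdorff_space X"

definition Omega_pt :: "'a topology \<Rightarrow> 'a \<Rightarrow> 'a set set" where
  "Omega_pt X x = {A. A \<subseteq> topspace X \<and> x \<notin> A \<and> x \<in> X closure_of A}"

text \<open>A (perfect-information) strategy for player II in G_1(Omega_x, Omega_x):
  given the list of player I's moves so far (A_0, ..., A_n), it returns a_n.
  Player II's own earlier moves are determined by I's earlier moves.\<close>
definition G1_Omega_II_winning :: "'a topology \<Rightarrow> 'a \<Rightarrow> ('a set list \<Rightarrow> 'a) \<Rightarrow> bool" where
  "G1_Omega_II_winning X x \<sigma> \<longleftrightarrow>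
     (\<forall>As. As \<noteq> [] \<and> (\<forall>A\<in>set As. A \<in> Omega_pt X x) \<longrightarrow> \<sigma> As \<in> last As) \<and>
     (\<forall>A :: nat \<Rightarrow> 'a set. (\<forall>n. A n \<in> Omega_pt X x) \<longrightarrow>
        range (\<lambda>n. \<sigma> (map A [0..<Suc n])) \<in> Omega_pt X x)"

definition G1_Omega_II_has_winning_strategy :: "'a topology \<Rightarrow> 'a \<Rightarrow> bool" where
  "G1_Omega_II_has_winning_strategy X x \<longleftrightarrow> (\<exists>\<sigma>. G1_Omega_II_winning X x \<sigma>)"

definition countably_tight_at :: "'a topology \<Rightarrow> 'a \<Rightarrow> bool" where
  "countably_tight_at Y y \<longleftrightarrow>
     (\<forall>A. A \<subseteq> topspace Y \<and> y \<in> Y closure_of A \<longrightarrow>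
        (\<exists>B. B \<subseteq> A \<and> countable B \<and> y \<in> Y closure_of B))"

end

theory Submission
  imports Defs
begin

primrec histf :: "('c \<Rightarrow> 'a set) \<Rightarrow> ('a set list \<Rightarrow> nat \<Rightarrow> 'c) \<Rightarrow> nat list \<Rightarrow> 'a set list" where
  "histf D G [] = []"
| "histf D G (k # ts) = histf D G ts @ [D (G (histf D G ts) k)]"

primrec pathf :: "(nat list \<Rightarrow> nat) \<Rightarrow> nat \<Rightarrow> nat list" where
  "pathf kk 0 = []"
| "pathf kk (Suc n) = kk (pathf kk n) # pathf kk n"

theorem corollary2p4:
  fixes X :: "'a topology" and x :: 'a
  assumes "tychonoff_space X"
    and "x \<in> topspace X"
    and "G1_Omega_II_has_winning_strategy X x"
  shows "\<forall>(Y :: 'b topology) y. y \<in> topspace Y \<and> countably_tight_at Y y \<longrightarrow>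
           countably_tight_at (prod_topology X Y) (x, y)"
proof (intro allI impI)
  fix Y :: "'b topology" and y
  assume Yy: "y \<in> topspace Y \<and> countably_tight_at Y y"
  from assms(3) obtain \<sigma> where win: "G1_Omega_II_winning X x \<sigma>"
    unfolding G1_Omega_II_has_winning_strategy_def by blast
  have win1: "\<And>As. As \<noteq> [] \<Longrightarrow> (\<forall>A\<in>set As. A \<in> Omega_pt X x) \<Longrightarrow> \<sigma> As \<in> last As"
    using win unfolding G1_Omega_II_winning_def by blast
  have win2: "\<And>A. (\<forall>n. A n \<in> Omega_pt X x) \<Longrightarrow> range (\<lambda>n. \<sigma> (map A [0..<Suc n])) \<in> Omega_pt X x"
    using win unfolding G1_Omega_II_winning_def by blast
  have ct: "\<And>S. S \<subseteq> topspace Y \<Longrightarrow> y \<in> Y closure_of S \<Longrightarrow> \<exists>B. B \<subseteq> S \<and> countable B \<and> y \<in> Y closure_of B"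
    using Yy unfolding countably_tight_at_def by blast
  show "countably_tight_at (prod_topology X Y) (x,y)"
    unfolding countably_tight_at_def
  proof (intro allI impI, elim conjE)
    fix A assume Asub: "A \<subseteq> topspace (prod_topology X Y)"
      and xyA: "(x,y) \<in> prod_topology X Y closure_of A"
    define T where "T = {b. (x,b) \<in> A}"
    show "\<exists>B. B \<subseteq> A \<and> countable B \<and> (x,y) \<in> prod_topology X Y closure_of B"
    proof (cases "y \<in> Y closure_of T")
      case True
      have "T \<subseteq> topspace Y" using Asub T_def by (auto simp: topspace_prod_topology)
      then obtain B where B: "B \<subseteq> T" "countable B" "y \<in> Y closure_of B" using ct True by blast
      have xx: "x \<in> X closure_of {x}" using closure_of_subset[of "{x}" X] assms(2) by auto
      show ?thesis
      proof (intro exI conjI)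
        show "{x} \<times> B \<subseteq> A" using B T_def by auto
        show "countable ({x} \<times> B)" using B by simp
        show "(x,y) \<in> prod_topology X Y closure_of ({x} \<times> B)"
          using B(3) xx by (simp add: closure_of_Times)
      qed
    next
      case False
      then obtain V0 where V0: "openin Y V0" "y \<in> V0" "V0 \<inter> T = {}"
        using Yy unfolding in_closure_of by blast
      define D where "D V = {a. \<exists>b. b \<in> V \<inter> V0 \<and> (a,b) \<in> A}" for V
      have DO: "D V \<in> Omega_pt X x" if "openin Y V" "y \<in> V" for V
      proof -
        have "D V \<subseteq> topspace X" using Asub by (auto simp: D_def topspace_prod_topology)
        moreover have "x \<notin> D V" using V0(3) by (auto simp: D_def T_def)
        moreover have "x \<in> X closure_of D V"
          unfolding in_closure_of
        proof (intro conjI allI impI)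
          show "x \<in> topspace X" by (rule assms(2))
          fix U assume U: "x \<in> U \<and> openin X U"
          have o1: "openin (prod_topology X Y) (U \<times> (V \<inter> V0))"
            using U that V0 by (simp add: openin_prod_Times_iff openin_Int)
          have o2: "(x,y) \<in> U \<times> (V \<inter> V0)" using U that V0 by auto
          have cl: "\<And>T. (x,y) \<in> T \<Longrightarrow> openin (prod_topology X Y) T \<Longrightarrow> \<exists>z. z \<in> A \<and> z \<in> T"
            using xyA unfolding in_closure_of by blast
          have "\<exists>p. p \<in> A \<and> p \<in> U \<times> (V \<inter> V0)" by (rule cl[OF o2 o1])
          then obtain p where "p \<in> A" "p \<in> U \<times> (V \<inter> V0)" by blast
          then show "\<exists>a. a \<in> D V \<and> a \<in> U" by (auto simp: D_def)
        qed
        ultimately show ?thesis by (simp add: Omega_pt_def)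
      qed
      define bb where "bb h V = (SOME b. b \<in> V \<inter> V0 \<and> (\<sigma> (h @ [D V]), b) \<in> A)" for h V
      have bbp: "bb h V \<in> V \<inter> V0 \<and> (\<sigma> (h @ [D V]), bb h V) \<in> A"
        if "\<forall>B\<in>set h. B \<in> Omega_pt X x" "openin Y V" "y \<in> V" for h V
      proof -
        have "\<sigma> (h @ [D V]) \<in> D V" using win1[of "h @ [D V]"] that DO by auto
        then have "\<exists>b. b \<in> V \<inter> V0 \<and> (\<sigma> (h @ [D V]), b) \<in> A" by (simp add: D_def)
        then show ?thesis unfolding bb_def by (rule someI_ex)
      qed
      have exG: "\<exists>g::nat \<Rightarrow> 'b set. (\<forall>k. openin Y (g k) \<and> y \<in> g k) \<and> y \<in> Y closure_of range (\<lambda>k. bb h (g k))"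
        if hO: "\<forall>B\<in>set h. B \<in> Omega_pt X x" for h
      proof -
        let ?S = "{bb h V | V. openin Y V \<and> y \<in> V}"
        have "?S \<subseteq> topspace Y"
        proof
          fix z assume "z \<in> ?S"
          then obtain V where V: "z = bb h V" "openin Y V" "y \<in> V" by blast
          then have "z \<in> V" using bbp[OF hO V(2,3)] by blast
          then show "z \<in> topspace Y" using openin_subset[OF V(2)] by blast
        qed
        moreover have "y \<in> Y closure_of ?S"
          unfolding in_closure_of
        proof (intro conjI allI impI)
          show "y \<in> topspace Y" using Yy by blast
          fix W assume W: "y \<in> W \<and> openin Y W"
          then have "bb h W \<in> W" using bbp[OF hO, of W] by blast
          moreover have "bb h W \<in> ?S" using W by blast
          ultimately show "\<exists>z. z \<in> ?S \<and> z \<in> W" by blast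
        qed
        ultimately have "\<exists>B. B \<subseteq> ?S \<and> countable B \<and> y \<in> Y closure_of B" by (rule ct)
        then obtain B where B: "B \<subseteq> ?S" "countable B" "y \<in> Y closure_of B" by blast
        have "B \<noteq> {}" using B(3) closure_of_empty[of Y] by (metis empty_iff)
        then have rB: "range (from_nat_into B) = B" using B(2) by (simp add: range_from_nat_into)
        have "\<forall>k. \<exists>V. openin Y V \<and> y \<in> V \<and> bb h V = from_nat_into B k"
        proof
          fix k
          have "from_nat_into B k \<in> ?S" using B(1) from_nat_into[OF \<open>B \<noteq> {}\<close>] by (rule subsetD)
          then show "\<exists>V. openin Y V \<and> y \<in> V \<and> bb h V = from_nat_into B k" by auto
        qed
        then obtain g where g: "\<forall>k. openin Y (g k) \<and> y \<in> g k \<and> bb h (g k) = from_nat_into B k" by metis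
        have "range (\<lambda>k. bb h (g k)) = B" using g rB by auto
        then show ?thesis using g B(3) by (intro exI[of _ g]) simp
      qed
      define G where "G h = (SOME g::nat \<Rightarrow> 'b set. (\<forall>k. openin Y (g k) \<and> y \<in> g k) \<and> y \<in> Y closure_of range (\<lambda>k. bb h (g k)))" for h
      have Gp: "(\<forall>k. openin Y (G h k) \<and> y \<in> G h k) \<and> y \<in> Y closure_of range (\<lambda>k. bb h (G h k))"
        if "\<forall>B\<in>set h. B \<in> Omega_pt X x" for h
        unfolding G_def using someI_ex[OF exG[OF that]] .
      have histO: "\<forall>B\<in>set (histf D G ts). B \<in> Omega_pt X x" for ts
      proof (induction ts)
        case Nil then show ?case by simp
      next
        case (Cons k ts)
        have "openin Y (G (histf D G ts) k)" "y \<in> G (histf D G ts) k"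
          using Gp[OF Cons.IH] by auto
        then have "D (G (histf D G ts) k) \<in> Omega_pt X x" by (rule DO)
        then show ?case using Cons.IH by simp
      qed
      define c where "c k ts = (\<sigma> (histf D G ts @ [D (G (histf D G ts) k)]), bb (histf D G ts) (G (histf D G ts) k))" for k ts
      define C where "C = (\<lambda>(k,ts). c k ts) ` (UNIV :: (nat \<times> nat list) set)"
      show ?thesis
      proof (intro exI conjI)
        show "C \<subseteq> A"
        proof
          fix p assume "p \<in> C"
          then obtain k ts where p: "p = c k ts" by (auto simp: C_def)
          have "openin Y (G (histf D G ts) k)" "y \<in> G (histf D G ts) k"
            using Gp[OF histO[of ts]] by auto
          from bbp[OF histO[of ts] this]
          show "p \<in> A" unfolding p c_def by blast
        qed
        show "countable C" by (simp add: C_def)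
        show "(x,y) \<in> prod_topology X Y closure_of C"
        proof (rule ccontr)
          assume nc: "(x,y) \<notin> prod_topology X Y closure_of C"
          have "(x,y) \<in> topspace (prod_topology X Y)" using assms(2) Yy by simp
          then obtain Ob where Ob: "openin (prod_topology X Y) Ob" "(x,y) \<in> Ob" "Ob \<inter> C = {}"
            using nc unfolding in_closure_of by blast
          then obtain U W where UW: "openin X U" "openin Y W" "x \<in> U" "y \<in> W" "U \<times> W \<subseteq> Ob"
            by (metis openin_prod_topology_alt)
          define kk where "kk ts = (SOME k. bb (histf D G ts) (G (histf D G ts) k) \<in> W)" for ts
          have kkp: "bb (histf D G ts) (G (histf D G ts) (kk ts)) \<in> W" for ts
          proof -
            have "y \<in> Y closure_of range (\<lambda>k. bb (histf D G ts) (G (histf D G ts) k))"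
              using Gp[OF histO[of ts]] by (rule conjunct2)
            then have "\<exists>k. bb (histf D G ts) (G (histf D G ts) k) \<in> W"
              using UW unfolding in_closure_of by blast
            then show ?thesis unfolding kk_def by (rule someI_ex)
          qed
          define p where "p = pathf kk"
          define As where "As n = D (G (histf D G (p n)) (kk (p n)))" for n
          have hp: "histf D G (p n) = map As [0..<n]" for n
            by (induction n) (simp_all add: p_def As_def)
          have AsO: "\<forall>n. As n \<in> Omega_pt X x"
          proof
            fix n
            have "openin Y (G (histf D G (p n)) (kk (p n)))" "y \<in> G (histf D G (p n)) (kk (p n))"
              using Gp[OF histO[of "p n"]] by auto
            then show "As n \<in> Omega_pt X x" unfolding As_def by (rule DO)
          qed
          have "range (\<lambda>n. \<sigma> (map As [0..<Suc n])) \<in> Omega_pt X x" using win2 AsO by blast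
          then have xcl: "x \<in> X closure_of range (\<lambda>n. \<sigma> (map As [0..<Suc n]))"
            by (simp add: Omega_pt_def)
          have nU: "\<sigma> (map As [0..<Suc n]) \<notin> U" for n
          proof
            assume inU: "\<sigma> (map As [0..<Suc n]) \<in> U"
            have "map As [0..<Suc n] = histf D G (p n) @ [As n]" using hp by simp
            then have cUW: "c (kk (p n)) (p n) \<in> U \<times> W" unfolding c_def using inU kkp
              by (simp add: As_def)
            have cC: "c (kk (p n)) (p n) \<in> C" unfolding C_def by (rule image_eqI[of _ _ "(kk (p n), p n)"]) simp_all
            have "c (kk (p n)) (p n) \<in> Ob" using UW(5) cUW by (rule subsetD)
            with cC Ob(3) show False by (metis IntI empty_iff)
          qed
          have cl2: "\<And>T. x \<in> T \<Longrightarrow> openin X T \<Longrightarrow> \<exists>z. z \<in> range (\<lambda>n. \<sigma> (map As [0..<Suc n])) \<and> z \<in> T"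
            using xcl unfolding in_closure_of by blast
          obtain z where "z \<in> range (\<lambda>n. \<sigma> (map As [0..<Suc n]))" "z \<in> U"
            using cl2[OF UW(3) UW(1)] by blast
          then show False using nU by auto
        qed
      qed
    qed
  qed
qed

end
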